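(* Let $\mathbf{P}$ be a finite poset, $M,N$ $\mathbf{P}$-modules, and $(\mathbf{Q},f\dashv g,h\dashv i,\Gamma)$ a Galois coupling of $(M,N)$. Then $(\mathrm{Int}\,\overline{\mathbf{Q}},\ \mathrm{Int}\,\overline{f}\dashv\mathrm{Int}\,\overline{g},\ \mathrm{Int}\,\overline{h}\dashv\mathrm{Int}\,\overline{i},\ K(\Gamma))$ is a Galois coupling of $(K(M),K(N))$ (as $\mathrm{Int}\,\overline{\mathbf{P}}$-modules).
   Context: Fix a field $k$; $\mathrm{vect}$ is the category of finite-dimensional $k$-vector spaces. Finite posets are categories with a unique morphism $x\to y$ iff $x\le y$; for a finite poset $\mathbf{S}$, an $\mathbf{S}$-module is a functor $\mathbf{S}\to\mathrm{vect}$; for monotone $g$, $g^*$ is precomposition with $g$. A Galois insertion $f:\mathbf{Q}\rightleftarrows\mathbf{S}:g$ is a pair of monotone maps $f:\mathbf{Q}\to\mathbf{S}$, $g:\mathbf{S}\to\mathbf{Q}$ with $f(u)\le x\iff u\le g(x)$ and $f\circ g=\mathrm{id}_{\mathbf{S}}$. A Galois coupling of a pair $(A,B)$ of $\mathbf{S}$-modules is $(\mathbf{Q},f\dashv g,h\dashv i,\Gamma)$ with $\mathbf{Q}$ a finite poset, $f:\mathbf{Q}\rightleftarrows\mathbf{S}:g$ and $h:\mathbf{Q}\rightleftarrows\mathbf{S}:i$ Galois insertions, and a $\mathbf{Q}$-module $\Gamma$ with $g^*\Gamma\cong A$, $i^*\Gamma\cong B$. For a finite poset $\mathbf{S}$,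 $\overline{\mathbf{S}}=\mathbf{S}\sqcup\{\top\}$ with $s<\top$ for all $s$; for monotone $f$, $\overline{f}$ extends $f$ by $\top\mapsto\top$. $\mathrm{Int}\,\mathbf{S}=\{(x,y)\in\mathbf{S}\times\mathbf{S}\mid x\le y\}$ with product order; $(\mathrm{Int}\,f)(x,y)=(f(x),f(y))$. For an $\mathbf{S}$-module $M$, $\overline{M}$ extends $M$ to $\overline{\mathbf{S}}$ by $\overline{M}(\top)=0$, and $K(M)$ is the $\mathrm{Int}\,\overline{\mathbf{S}}$-module $K(M)((x,y))=\ker\overline{M}(x\le y)$ with structure map for $(x_1,y_1)\le(x_2,y_2)$ the restriction of $\overline{M}(x_1\le x_2)$ (here $K$ is applied both to $\mathbf{P}$-modules and to $\mathbf{Q}$-modules). *)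

theory Defs
  imports Main "HOL.Vector_Spaces"
begin

definition finite_poset :: "'a set \<Rightarrow> ('a \<Rightarrow> 'a \<Rightarrow> bool) \<Rightarrow> bool" where
  "finite_poset S le \<longleftrightarrow> finite S
     \<and> (\<forall>x\<in>S. le x x)
     \<and> (\<forall>x\<in>S. \<forall>y\<in>S. le x y \<and> le y x \<longrightarrow> x = y)
     \<and> (\<forall>x\<in>S. \<forall>y\<in>S. \<forall>z\<in>S. le x y \<and> le y z \<longrightarrow> le x z)"

definition monotone_between ::
  "'a set \<Rightarrow> ('a \<Rightarrow> 'a \<Rightarrow> bool) \<Rightarrow> 'b set \<Rightarrow> ('b \<Rightarrow> 'b \<Rightarrow> bool) \<Rightarrow> ('a \<Rightarrow> 'b) \<Rightarrow> bool" where
  "monotone_between A leA B leB f \<longleftrightarrow>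
     (\<forall>x\<in>A. f x \<in> B) \<and> (\<forall>x\<in>A. \<forall>y\<in>A. leA x y \<longrightarrow> leB (f x) (f y))"

definition galois_insertion ::
  "'b set \<Rightarrow> ('b \<Rightarrow> 'b \<Rightarrow> bool) \<Rightarrow> 'a set \<Rightarrow> ('a \<Rightarrow> 'a \<Rightarrow> bool)
   \<Rightarrow> ('b \<Rightarrow> 'a) \<Rightarrow> ('a \<Rightarrow> 'b) \<Rightarrow> bool" where
  "galois_insertion Q leQ S leS f g \<longleftrightarrow>
     monotone_between Q leQ S leS f \<and> monotone_between S leS Q leQ g
     \<and> (\<forall>u\<in>Q. \<forall>x\<in>S. leS (f u) x \<longleftrightarrow> leQ u (g x))
     \<and> (\<forall>x\<in>S. f (g x) = x)"

text \<open>\<open>None\<close> plays the role of the new top element.\<close>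
definition bar_carrier :: "'a set \<Rightarrow> 'a option set" where
  "bar_carrier S = insert None (Some ` S)"

definition bar_le :: "('a \<Rightarrow> 'a \<Rightarrow> bool) \<Rightarrow> 'a option \<Rightarrow> 'a option \<Rightarrow> bool" where
  "bar_le le x y = (case y of None \<Rightarrow> True
                     | Some b \<Rightarrow> (case x of None \<Rightarrow> False | Some a \<Rightarrow> le a b))"

definition bar_map :: "('b \<Rightarrow> 'a) \<Rightarrow> 'b option \<Rightarrow> 'a option" where
  "bar_map f = map_option f"

definition Int_carrier :: "'a set \<Rightarrow> ('a \<Rightarrow> 'a \<Rightarrow> bool) \<Rightarrow> ('a \<times> 'a) set" where
  "Int_carrier S le = {(x, y). x \<in> S \<and> y \<in> S \<and> le x y}"

definition Int_le :: "('a \<Rightarrow> 'a \<Rightarrow> bool) \<Rightarrow> 'a \<times> 'a \<Rightarrow> 'a \<times> 'a \<Rightarrow> bool" where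
  "Int_le le p q \<longleftrightarrow> le (fst p) (fst q) \<and> le (snd p) (snd q)"

definition Int_map :: "('b \<Rightarrow> 'a) \<Rightarrow> 'b \<times> 'b \<Rightarrow> 'a \<times> 'a" where
  "Int_map f p = (f (fst p), f (snd p))"

text \<open>An S-module (functor S \<rightarrow> vect over the field 'k with scalar action scale) is
  represented by a family of finite-dimensional subspaces V x of an ambient k-vector space
  'v together with linear structure maps \<phi> x y for x \<le> y, satisfying the functor laws
  on the relevant subspaces.\<close>
type_synonym ('a, 'v) pmod = "('a \<Rightarrow> 'v set) \<times> ('a \<Rightarrow> 'a \<Rightarrow> 'v \<Rightarrow> 'v)"

definition fin_dim_subspace :: "('k::field \<Rightarrow> 'v::ab_group_add \<Rightarrow> 'v) \<Rightarrow> 'v set \<Rightarrow> bool" where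
  "fin_dim_subspace scale V \<longleftrightarrow> module.subspace scale V
     \<and> (\<exists>B. finite B \<and> B \<subseteq> V \<and> module.span scale B = V)"

definition is_pmod ::
  "('k::field \<Rightarrow> 'v::ab_group_add \<Rightarrow> 'v) \<Rightarrow> 'a set \<Rightarrow> ('a \<Rightarrow> 'a \<Rightarrow> bool) \<Rightarrow> ('a, 'v) pmod \<Rightarrow> bool" where
  "is_pmod scale S le M \<longleftrightarrow> vector_space scale
     \<and> (\<forall>x\<in>S. fin_dim_subspace scale (fst M x))
     \<and> (\<forall>x\<in>S. \<forall>y\<in>S. le x y \<longrightarrow>
          Vector_Spaces.linear scale scale (snd M x y) \<and> snd M x y ` fst M x \<subseteq> fst M y)
     \<and> (\<forall>x\<in>S. \<forall>v\<in>fst M x. snd M x x v = v)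
     \<and> (\<forall>x\<in>S. \<forall>y\<in>S. \<forall>z\<in>S. le x y \<and> le y z \<longrightarrow>
          (\<forall>v\<in>fst M x. snd M x z v = snd M y z (snd M x y v)))"

definition pmod_iso ::
  "('k::field \<Rightarrow> 'v::ab_group_add \<Rightarrow> 'v) \<Rightarrow> ('k \<Rightarrow> 'w::ab_group_add \<Rightarrow> 'w)
   \<Rightarrow> 'a set \<Rightarrow> ('a \<Rightarrow> 'a \<Rightarrow> bool) \<Rightarrow> ('a, 'v) pmod \<Rightarrow> ('a, 'w) pmod \<Rightarrow> bool" where
  "pmod_iso s1 s2 S le M1 M2 \<longleftrightarrow> (\<exists>\<alpha>.
     (\<forall>x\<in>S. Vector_Spaces.linear s1 s2 (\<alpha> x) \<and> bij_betw (\<alpha> x) (fst M1 x) (fst M2 x))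
     \<and> (\<forall>x\<in>S. \<forall>y\<in>S. le x y \<longrightarrow>
          (\<forall>v\<in>fst M1 x. \<alpha> y (snd M1 x y v) = snd M2 x y (\<alpha> x v))))"

definition pullback :: "('a \<Rightarrow> 'b) \<Rightarrow> ('b, 'v) pmod \<Rightarrow> ('a, 'v) pmod" where
  "pullback g M = (\<lambda>x. fst M (g x), \<lambda>x y. snd M (g x) (g y))"

definition bar_mod :: "('a, 'v::zero) pmod \<Rightarrow> ('a option, 'v) pmod" where
  "bar_mod M =
    (\<lambda>x. case x of None \<Rightarrow> {0} | Some a \<Rightarrow> fst M a,
     \<lambda>x y. case (x, y) of (Some a, Some b) \<Rightarrow> snd M a b | _ \<Rightarrow> (\<lambda>_. 0))"

definition K_mod :: "('a, 'v::zero) pmod \<Rightarrow> ('a option \<times> 'a option, 'v) pmod" where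
  "K_mod M =
    (\<lambda>p. {v \<in> fst (bar_mod M) (fst p). snd (bar_mod M) (fst p) (snd p) v = 0},
     \<lambda>p q. snd (bar_mod M) (fst p) (fst q))"

definition galois_coupling ::
  "('k::field \<Rightarrow> 'v::ab_group_add \<Rightarrow> 'v) \<Rightarrow> ('k \<Rightarrow> 'w::ab_group_add \<Rightarrow> 'w)
   \<Rightarrow> 'a set \<Rightarrow> ('a \<Rightarrow> 'a \<Rightarrow> bool)
   \<Rightarrow> 'b set \<Rightarrow> ('b \<Rightarrow> 'b \<Rightarrow> bool)
   \<Rightarrow> ('b \<Rightarrow> 'a) \<Rightarrow> ('a \<Rightarrow> 'b) \<Rightarrow> ('b \<Rightarrow> 'a) \<Rightarrow> ('a \<Rightarrow> 'b)
   \<Rightarrow> ('b, 'w) pmod \<Rightarrow> ('a, 'v) pmod \<Rightarrow> ('a, 'v) pmod \<Rightarrow> bool" where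
  "galois_coupling sV sW S leS Q leQ f g h i \<Gamma> A B \<longleftrightarrow>
     finite_poset S leS \<and> is_pmod sV S leS A \<and> is_pmod sV S leS B
     \<and> finite_poset Q leQ
     \<and> galois_insertion Q leQ S leS f g \<and> galois_insertion Q leQ S leS h i
     \<and> is_pmod sW Q leQ \<Gamma>
     \<and> pmod_iso sW sV S leS (pullback g \<Gamma>) A
     \<and> pmod_iso sW sV S leS (pullback i \<Gamma>) B"

end

theory Submission
  imports Defs
begin

lemma lin0: "Vector_Spaces.linear s1 s2 f \<Longrightarrow> f 0 = 0"
  unfolding linear_iff by (metis add_cancel_right_right add_0)

lemma lin_zero: "vector_space s1 \<Longrightarrow> vector_space s2 \<Longrightarrow> Vector_Spaces.linear s1 s2 (\<lambda>_. 0)"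
  unfolding linear_iff
proof (intro conjI allI)
  assume a: "vector_space s1" "vector_space s2"
  then show "vector_space s1" "vector_space s2" by auto
  fix c x show "(0::'c) = s2 c 0" using a by (metis module_iff_vector_space module.scale_zero_right)
qed simp

lemma fds_sub:
  assumes vs: "vector_space s" and V: "fin_dim_subspace s V" and W: "module.subspace s W" and WV: "W \<subseteq> V"
  shows "fin_dim_subspace s W"
proof -
  have m: "module s" using vs by (simp add: module_iff_vector_space)
  obtain B where B: "finite B" "B \<subseteq> V" "module.span s B = V" using V unfolding fin_dim_subspace_def by blast
  obtain C where C: "C \<subseteq> W" "\<not> module.dependent s C" "W \<subseteq> module.span s C"
    and "card C = vector_space.dim s W"
    by (rule vector_space.basis_exists[OF vs])
  have "C \<subseteq> module.span s B" using C(1) WV B(3) by auto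
  then have fC: "finite C" using vector_space.independent_span_bound[OF vs B(1) C(2)] by blast
  have "module.span s C \<subseteq> W" using module.span_minimal[OF m C(1) W] .
  then show ?thesis unfolding fin_dim_subspace_def using W fC C by blast
qed

lemma ker_fds:
  assumes vs: "vector_space s" and V: "fin_dim_subspace s V" and f: "Vector_Spaces.linear s s f"
  shows "fin_dim_subspace s {v \<in> V. f v = 0}"
proof (rule fds_sub[OF vs V])
  have m: "module s" using vs by (simp add: module_iff_vector_space)
  have sV: "module.subspace s V" using V by (simp add: fin_dim_subspace_def)
  from f have add: "f (x + y) = f x + f y" and sc: "f (s c x) = s c (f x)" for x y c
    unfolding linear_iff by auto
  have "s c 0 = 0" for c using m by (metis module.scale_zero_right)
  then show "module.subspace s {v \<in> V. f v = 0}"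
    unfolding module.subspace_def[OF m]
  proof (intro conjI ballI allI)
    show "0 \<in> {v \<in> V. f v = 0}" using sV lin0[OF f] m module.subspace_0 by blast
    fix x y assume x: "x \<in> {v \<in> V. f v = 0}" and y: "y \<in> {v \<in> V. f v = 0}"
    then show "x + y \<in> {v \<in> V. f v = 0}" using sV m module.subspace_add add by fastforce
  next
    fix c x assume x: "x \<in> {v \<in> V. f v = 0}"
    then show "s c x \<in> {v \<in> V. f v = 0}" using sV m module.subspace_scale sc \<open>\<And>c. s c 0 = 0\<close> by fastforce
  qed
qed blast

lemma bij_restrict:
  assumes "bij_betw a A B" "\<And>w. w \<in> A \<Longrightarrow> Q (a w) \<longleftrightarrow> P w"
  shows "bij_betw a {w \<in> A. P w} {v \<in> B. Q v}"
proof -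
  have "a ` {w \<in> A. P w} = {v \<in> B. Q v}"
  proof
    show "a ` {w \<in> A. P w} \<subseteq> {v \<in> B. Q v}" using assms unfolding bij_betw_def by auto
    show "{v \<in> B. Q v} \<subseteq> a ` {w \<in> A. P w}"
    proof
      fix v assume v: "v \<in> {v \<in> B. Q v}"
      then obtain w where "w \<in> A" "v = a w" using assms(1) unfolding bij_betw_def by blast
      then show "v \<in> a ` {w \<in> A. P w}" using v assms(2) by auto
    qed
  qed
  moreover have "inj_on a {w \<in> A. P w}" using assms(1) unfolding bij_betw_def by (auto intro: inj_on_subset)
  ultimately show ?thesis unfolding bij_betw_def by blast
qed

lemma fp_bar: "finite_poset S le \<Longrightarrow> finite_poset (bar_carrier S) (bar_le le)"
proof -
  assume a: "finite_poset S le"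
  have f: "finite S" and r: "\<And>x. x \<in> S \<Longrightarrow> le x x"
    and an: "\<And>x y. x \<in> S \<Longrightarrow> y \<in> S \<Longrightarrow> le x y \<Longrightarrow> le y x \<Longrightarrow> x = y"
    and t: "\<And>x y z. x \<in> S \<Longrightarrow> y \<in> S \<Longrightarrow> z \<in> S \<Longrightarrow> le x y \<Longrightarrow> le y z \<Longrightarrow> le x z"
    using a unfolding finite_poset_def by blast+
  have mem: "x \<in> bar_carrier S \<longleftrightarrow> x = None \<or> (\<exists>a\<in>S. x = Some a)" for x
    unfolding bar_carrier_def by auto
  show ?thesis unfolding finite_poset_def
  proof (intro conjI ballI impI)
    show "finite (bar_carrier S)" unfolding bar_carrier_def using f by simp
  next
    fix x assume "x \<in> bar_carrier S" then show "bar_le le x x"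
      using r unfolding mem bar_le_def by auto
  next
    fix x y assume x: "x \<in> bar_carrier S" and y: "y \<in> bar_carrier S" and l: "bar_le le x y \<and> bar_le le y x"
    show "x = y"
    proof (cases x)
      case None then show ?thesis using l by (cases y) (auto simp: bar_le_def)
    next
      case (Some a)
      then obtain b where yb: "y = Some b" using l by (cases y) (auto simp: bar_le_def)
      have "a \<in> S" "b \<in> S" using x y Some yb unfolding mem by auto
      then show ?thesis using an[of a b] l Some yb unfolding bar_le_def by simp
    qed
  next
    fix x y z assume x: "x \<in> bar_carrier S" and y: "y \<in> bar_carrier S" and z: "z \<in> bar_carrier S"
      and l: "bar_le le x y \<and> bar_le le y z"
    show "bar_le le x z"
    proof (cases z)
      case None then show ?thesis by (simp add: bar_le_def)
    next
      case (Some c)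
      then obtain b where yb: "y = Some b" using l by (cases y) (auto simp: bar_le_def)
      then obtain a where xa: "x = Some a" using l by (cases x) (auto simp: bar_le_def)
      have "a \<in> S" "b \<in> S" "c \<in> S" using x y z Some yb xa unfolding mem by auto
      then show ?thesis using t[of a b c] l Some yb xa unfolding bar_le_def by simp
    qed
  qed
qed

lemma fp_Int: "finite_poset S le \<Longrightarrow> finite_poset (Int_carrier S le) (Int_le le)"
proof -
  assume a: "finite_poset S le"
  have f: "finite S" and r: "\<And>x. x \<in> S \<Longrightarrow> le x x"
    and an: "\<And>x y. x \<in> S \<Longrightarrow> y \<in> S \<Longrightarrow> le x y \<Longrightarrow> le y x \<Longrightarrow> x = y"
    and t: "\<And>x y z. x \<in> S \<Longrightarrow> y \<in> S \<Longrightarrow> z \<in> S \<Longrightarrow> le x y \<Longrightarrow> le y z \<Longrightarrow> le x z"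
    using a unfolding finite_poset_def by blast+
  have mem: "p \<in> Int_carrier S le \<longleftrightarrow> fst p \<in> S \<and> snd p \<in> S \<and> le (fst p) (snd p)" for p
    unfolding Int_carrier_def by (cases p) auto
  show ?thesis unfolding finite_poset_def
  proof (intro conjI ballI impI)
    have "Int_carrier S le \<subseteq> S \<times> S" unfolding Int_carrier_def by auto
    then show "finite (Int_carrier S le)" using f by (meson finite_SigmaI finite_subset)
  next
    fix p assume "p \<in> Int_carrier S le" then show "Int_le le p p"
      using r unfolding mem Int_le_def by auto
  next
    fix p q assume p: "p \<in> Int_carrier S le" and q: "q \<in> Int_carrier S le" and l: "Int_le le p q \<and> Int_le le q p"
    have "fst p = fst q" using an p q l unfolding mem Int_le_def by blast
    moreover have "snd p = snd q" using an p q l unfolding mem Int_le_def by blast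
    ultimately show "p = q" by (simp add: prod_eq_iff)
  next
    fix p q r assume p: "p \<in> Int_carrier S le" and q: "q \<in> Int_carrier S le" and rr: "r \<in> Int_carrier S le"
      and l: "Int_le le p q \<and> Int_le le q r"
    have "le (fst p) (fst r)" using t[of "fst p" "fst q" "fst r"] p q rr l unfolding mem Int_le_def by blast
    moreover have "le (snd p) (snd r)" using t[of "snd p" "snd q" "snd r"] p q rr l unfolding mem Int_le_def by blast
    ultimately show "Int_le le p r" unfolding Int_le_def by simp
  qed
qed

lemma gi_bar: "galois_insertion Q leQ S leS f g \<Longrightarrow>
  galois_insertion (bar_carrier Q) (bar_le leQ) (bar_carrier S) (bar_le leS) (bar_map f) (bar_map g)"
  unfolding galois_insertion_def monotone_between_def bar_carrier_def bar_le_def bar_map_def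
  by (auto split: option.splits)

lemma gi_Int: "galois_insertion Q leQ S leS f g \<Longrightarrow>
  galois_insertion (Int_carrier Q leQ) (Int_le leQ) (Int_carrier S leS) (Int_le leS) (Int_map f) (Int_map g)"
  unfolding galois_insertion_def monotone_between_def Int_carrier_def Int_le_def Int_map_def
  by auto

definition Kgen :: "('a, 'v::zero) pmod \<Rightarrow> ('a \<times> 'a, 'v) pmod" where
  "Kgen M = (\<lambda>p. {v \<in> fst M (fst p). snd M (fst p) (snd p) v = 0}, \<lambda>p q. snd M (fst p) (fst q))"

lemma K_Kgen: "K_mod M = Kgen (bar_mod M)"
  by (simp add: K_mod_def Kgen_def)

lemma pull_bar: "pullback (bar_map g) (bar_mod G) = bar_mod (pullback g G)"
  unfolding pullback_def bar_mod_def bar_map_def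
  by (auto intro!: ext split: option.splits)

lemma pull_K: "pullback (Int_map g) (Kgen G) = Kgen (pullback g G)"
  unfolding pullback_def Kgen_def Int_map_def by auto

lemma pull_pmod: "is_pmod s Q leQ G \<Longrightarrow> monotone_between S leS Q leQ g \<Longrightarrow> is_pmod s S leS (pullback g G)"
  unfolding is_pmod_def monotone_between_def pullback_def by auto

lemma fds_zero: "vector_space s \<Longrightarrow> fin_dim_subspace s {0}"
  unfolding fin_dim_subspace_def
  by (metis empty_subsetI finite.emptyI module.span_empty module.subspace_single_0 module_iff_vector_space)

lemma bar_pmod:
  assumes M: "is_pmod s S le M"
  shows "is_pmod s (bar_carrier S) (bar_le le) (bar_mod M)"
proof -
  have vs: "vector_space s" and M1: "\<And>x. x \<in> S \<Longrightarrow> fin_dim_subspace s (fst M x)"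
    and M2: "\<And>x y. x \<in> S \<Longrightarrow> y \<in> S \<Longrightarrow> le x y \<Longrightarrow> Vector_Spaces.linear s s (snd M x y)"
    and M3: "\<And>x y v. x \<in> S \<Longrightarrow> y \<in> S \<Longrightarrow> le x y \<Longrightarrow> v \<in> fst M x \<Longrightarrow> snd M x y v \<in> fst M y"
    and M4: "\<And>x v. x \<in> S \<Longrightarrow> v \<in> fst M x \<Longrightarrow> snd M x x v = v"
    and M5: "\<And>x y z v. x \<in> S \<Longrightarrow> y \<in> S \<Longrightarrow> z \<in> S \<Longrightarrow> le x y \<Longrightarrow> le y z \<Longrightarrow> v \<in> fst M x
       \<Longrightarrow> snd M x z v = snd M y z (snd M x y v)"
    using M unfolding is_pmod_def by (blast+)
  have z: "Vector_Spaces.linear s s (\<lambda>_. 0)" using lin_zero[OF vs vs] .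
  show ?thesis
    unfolding is_pmod_def
  proof (intro conjI ballI impI allI)
    show "vector_space s" by fact
    fix x assume x: "x \<in> bar_carrier S"
    show "fin_dim_subspace s (fst (bar_mod M) x)"
    proof (cases x)
      case None then show ?thesis using fds_zero[OF vs] by (simp add: bar_mod_def)
    next
      case (Some a) then show ?thesis using x M1 by (simp add: bar_mod_def bar_carrier_def image_iff)
    qed
    fix v assume v: "v \<in> fst (bar_mod M) x"
    show "snd (bar_mod M) x x v = v"
    proof (cases x)
      case None then show ?thesis using v by (simp add: bar_mod_def)
    next
      case (Some a) then show ?thesis using x v M4 by (simp add: bar_mod_def bar_carrier_def image_iff)
    qed
  next
    fix x y assume x: "x \<in> bar_carrier S" and y: "y \<in> bar_carrier S" and le: "bar_le le x y"
    show "Vector_Spaces.linear s s (snd (bar_mod M) x y)"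
    proof (cases x)
      case None then show ?thesis using z by (simp add: bar_mod_def)
    next
      case (Some a) note xa = this
      show ?thesis
      proof (cases y)
        case None then show ?thesis using z xa by (simp add: bar_mod_def)
      next
        case (Some b) then show ?thesis using xa x y le M2 by (simp add: bar_mod_def bar_carrier_def image_iff bar_le_def)
      qed
    qed
    show "snd (bar_mod M) x y ` fst (bar_mod M) x \<subseteq> fst (bar_mod M) y"
    proof
      fix w assume "w \<in> snd (bar_mod M) x y ` fst (bar_mod M) x"
      then obtain v where v: "v \<in> fst (bar_mod M) x" and w: "w = snd (bar_mod M) x y v" by blast
      show "w \<in> fst (bar_mod M) y"
      proof (cases y)
        case None then show ?thesis using w by (simp add: bar_mod_def split: option.splits)
      next
        case (Some b) note yb = this
        then obtain a where xa: "x = Some a" using le by (cases x) (auto simp: bar_le_def)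
        show ?thesis using xa yb x y le v w M3 by (simp add: bar_mod_def bar_carrier_def image_iff bar_le_def)
      qed
    qed
  next
    fix x y z assume x: "x \<in> bar_carrier S" and y: "y \<in> bar_carrier S" and z: "z \<in> bar_carrier S"
      and le: "bar_le le x y \<and> bar_le le y z"
    fix v assume v: "v \<in> fst (bar_mod M) x"
    show "snd (bar_mod M) x z v = snd (bar_mod M) y z (snd (bar_mod M) x y v)"
    proof (cases z)
      case None then show ?thesis by (simp add: bar_mod_def split: option.splits)
    next
      case (Some c)
      then obtain b where yb: "y = Some b" using le by (cases y) (auto simp: bar_le_def)
      then obtain a where xa: "x = Some a" using le by (cases x) (auto simp: bar_le_def)
      show ?thesis using xa yb Some x y z le v M5
        by (simp add: bar_mod_def bar_carrier_def image_iff bar_le_def)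
    qed
  qed
qed

lemma K_pmod:
  assumes M: "is_pmod s S le M"
  shows "is_pmod s (Int_carrier S le) (Int_le le) (Kgen M)"
proof -
  have vs: "vector_space s" and M1: "\<And>x. x \<in> S \<Longrightarrow> fin_dim_subspace s (fst M x)"
    and M2: "\<And>x y. x \<in> S \<Longrightarrow> y \<in> S \<Longrightarrow> le x y \<Longrightarrow> Vector_Spaces.linear s s (snd M x y)"
    and M3: "\<And>x y v. x \<in> S \<Longrightarrow> y \<in> S \<Longrightarrow> le x y \<Longrightarrow> v \<in> fst M x \<Longrightarrow> snd M x y v \<in> fst M y"
    and M4: "\<And>x v. x \<in> S \<Longrightarrow> v \<in> fst M x \<Longrightarrow> snd M x x v = v"
    and M5: "\<And>x y z v. x \<in> S \<Longrightarrow> y \<in> S \<Longrightarrow> z \<in> S \<Longrightarrow> le x y \<Longrightarrow> le y z \<Longrightarrow> v \<in> fst M x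
       \<Longrightarrow> snd M x z v = snd M y z (snd M x y v)"
    using M unfolding is_pmod_def by (blast+)
  show ?thesis
    unfolding is_pmod_def
  proof (intro conjI ballI impI allI)
    show "vector_space s" by fact
    fix p assume p: "p \<in> Int_carrier S le"
    then obtain x y where xy: "p = (x, y)" "x \<in> S" "y \<in> S" "le x y" unfolding Int_carrier_def by auto
    have "fin_dim_subspace s {v \<in> fst M x. snd M x y v = 0}"
      using ker_fds[OF vs M1[OF xy(2)] M2[OF xy(2) xy(3) xy(4)]] .
    then show "fin_dim_subspace s (fst (Kgen M) p)" unfolding Kgen_def using xy by simp
    fix v assume "v \<in> fst (Kgen M) p"
    then show "snd (Kgen M) p p v = v" unfolding Kgen_def using xy M4 by simp
  next
    fix p q assume p: "p \<in> Int_carrier S le" and q: "q \<in> Int_carrier S le" and le: "Int_le le p q"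
    obtain x1 y1 where 1: "p = (x1, y1)" "x1 \<in> S" "y1 \<in> S" "le x1 y1" using p unfolding Int_carrier_def by auto
    obtain x2 y2 where 2: "q = (x2, y2)" "x2 \<in> S" "y2 \<in> S" "le x2 y2" using q unfolding Int_carrier_def by auto
    have l: "le x1 x2" "le y1 y2" using le 1 2 unfolding Int_le_def by auto
    show "Vector_Spaces.linear s s (snd (Kgen M) p q)" unfolding Kgen_def using 1 2 l M2 by simp
    show "snd (Kgen M) p q ` fst (Kgen M) p \<subseteq> fst (Kgen M) q"
    proof
      fix w assume "w \<in> snd (Kgen M) p q ` fst (Kgen M) p"
      then obtain v where v: "v \<in> fst M x1" "snd M x1 y1 v = 0" and w: "w = snd M x1 x2 v"
        unfolding Kgen_def using 1 2 by auto
      have "snd M x2 y2 w = snd M x1 y2 v" using M5[OF 1(2) 2(2) 2(3) l(1) 2(4) v(1)] w by simp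
      also have "\<dots> = snd M y1 y2 (snd M x1 y1 v)" using M5[OF 1(2) 1(3) 2(3) 1(4) l(2) v(1)] .
      also have "\<dots> = 0" using v(2) lin0[OF M2[OF 1(3) 2(3) l(2)]] by simp
      finally have "snd M x2 y2 w = 0" .
      moreover have "w \<in> fst M x2" using M3[OF 1(2) 2(2) l(1) v(1)] w by simp
      ultimately show "w \<in> fst (Kgen M) q" unfolding Kgen_def using 2 by simp
    qed
  next
    fix p q r assume p: "p \<in> Int_carrier S le" and q: "q \<in> Int_carrier S le" and r: "r \<in> Int_carrier S le"
      and le: "Int_le le p q \<and> Int_le le q r"
    fix v assume v: "v \<in> fst (Kgen M) p"
    obtain x1 y1 where 1: "p = (x1, y1)" "x1 \<in> S" using p unfolding Int_carrier_def by auto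
    obtain x2 y2 where 2: "q = (x2, y2)" "x2 \<in> S" using q unfolding Int_carrier_def by auto
    obtain x3 y3 where 3: "r = (x3, y3)" "x3 \<in> S" using r unfolding Int_carrier_def by auto
    have l: "le x1 x2" "le x2 x3" using le 1 2 3 unfolding Int_le_def by auto
    have vv: "v \<in> fst M x1" using v 1 unfolding Kgen_def by simp
    show "snd (Kgen M) p r v = snd (Kgen M) q r (snd (Kgen M) p q v)"
      unfolding Kgen_def using 1 2 3 M5[OF 1(2) 2(2) 3(2) l vv] by simp
  qed
qed

lemma iso_bar:
  assumes v1: "vector_space s1" and v2: "vector_space s2" and iso: "pmod_iso s1 s2 S le A B"
  shows "pmod_iso s1 s2 (bar_carrier S) (bar_le le) (bar_mod A) (bar_mod B)"
proof -
  obtain \<alpha> where a1: "\<forall>x\<in>S. Vector_Spaces.linear s1 s2 (\<alpha> x) \<and> bij_betw (\<alpha> x) (fst A x) (fst B x)"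
    and a2: "\<forall>x\<in>S. \<forall>y\<in>S. le x y \<longrightarrow> (\<forall>v\<in>fst A x. \<alpha> y (snd A x y v) = snd B x y (\<alpha> x v))"
    using iso unfolding pmod_iso_def by blast
  define \<beta> where "\<beta> x = (case x of None \<Rightarrow> (\<lambda>_. 0) | Some a \<Rightarrow> \<alpha> a)" for x
  have z: "Vector_Spaces.linear s1 s2 (\<lambda>_. 0)" using lin_zero[OF v1 v2] .
  have "\<forall>x\<in>bar_carrier S. Vector_Spaces.linear s1 s2 (\<beta> x) \<and> bij_betw (\<beta> x) (fst (bar_mod A) x) (fst (bar_mod B) x)"
  proof
    fix x assume x: "x \<in> bar_carrier S"
    show "Vector_Spaces.linear s1 s2 (\<beta> x) \<and> bij_betw (\<beta> x) (fst (bar_mod A) x) (fst (bar_mod B) x)"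
    proof (cases x)
      case None
      then show ?thesis using z unfolding \<beta>_def bar_mod_def by (simp add: bij_betw_def)
    next
      case (Some a)
      then show ?thesis using x a1 unfolding \<beta>_def bar_mod_def bar_carrier_def by auto
    qed
  qed
  moreover have "\<forall>x\<in>bar_carrier S. \<forall>y\<in>bar_carrier S. bar_le le x y \<longrightarrow>
     (\<forall>v\<in>fst (bar_mod A) x. \<beta> y (snd (bar_mod A) x y v) = snd (bar_mod B) x y (\<beta> x v))"
  proof (intro ballI impI)
    fix x y v assume x: "x \<in> bar_carrier S" and y: "y \<in> bar_carrier S" and le: "bar_le le x y"
      and v: "v \<in> fst (bar_mod A) x"
    show "\<beta> y (snd (bar_mod A) x y v) = snd (bar_mod B) x y (\<beta> x v)"
      using x y le v a2 unfolding \<beta>_def bar_mod_def bar_carrier_def bar_le_def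
      by (cases x; cases y) auto
  qed
  ultimately show ?thesis unfolding pmod_iso_def by blast
qed

lemma iso_K:
  assumes A: "is_pmod s1 S le A" and iso: "pmod_iso s1 s2 S le A B"
  shows "pmod_iso s1 s2 (Int_carrier S le) (Int_le le) (Kgen A) (Kgen B)"
proof -
  obtain \<alpha> where a1: "\<forall>x\<in>S. Vector_Spaces.linear s1 s2 (\<alpha> x) \<and> bij_betw (\<alpha> x) (fst A x) (fst B x)"
    and a2: "\<forall>x\<in>S. \<forall>y\<in>S. le x y \<longrightarrow> (\<forall>v\<in>fst A x. \<alpha> y (snd A x y v) = snd B x y (\<alpha> x v))"
    using iso unfolding pmod_iso_def by blast
  note AA = A[unfolded is_pmod_def]
  define \<beta> where "\<beta> = (\<lambda>p. if fst p = snd p then \<alpha> (fst p) else \<alpha> (fst p))"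
  have "\<forall>p\<in>Int_carrier S le. Vector_Spaces.linear s1 s2 (\<beta> p) \<and> bij_betw (\<beta> p) (fst (Kgen A) p) (fst (Kgen B) p)"
  proof
    fix p assume p: "p \<in> Int_carrier S le"
    then obtain x y where xy: "p = (x, y)" "x \<in> S" "y \<in> S" "le x y" unfolding Int_carrier_def by auto
    have key: "snd B x y (\<alpha> x w) = 0 \<longleftrightarrow> snd A x y w = 0" if w: "w \<in> fst A x" for w
    proof -
      have e: "snd B x y (\<alpha> x w) = \<alpha> y (snd A x y w)" using a2 xy w by auto
      have i: "snd A x y w \<in> fst A y" using AA xy w by blast
      have z0: "0 \<in> fst A y" using AA xy unfolding fin_dim_subspace_def
        by (meson module.subspace_0 module_iff_vector_space)
      have l0: "\<alpha> y 0 = 0" using a1 xy lin0 by blast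
      have inj: "inj_on (\<alpha> y) (fst A y)" using a1 xy unfolding bij_betw_def by blast
      show ?thesis using e i z0 l0 inj unfolding inj_on_def by metis
    qed
    have "bij_betw (\<alpha> x) {w \<in> fst A x. snd A x y w = 0} {v \<in> fst B x. snd B x y v = 0}"
      by (rule bij_restrict) (use a1 xy key in auto)
    then show "Vector_Spaces.linear s1 s2 (\<beta> p) \<and> bij_betw (\<beta> p) (fst (Kgen A) p) (fst (Kgen B) p)"
      using a1 xy unfolding \<beta>_def Kgen_def by auto
  qed
  moreover have "\<forall>p\<in>Int_carrier S le. \<forall>q\<in>Int_carrier S le. Int_le le p q \<longrightarrow>
     (\<forall>v\<in>fst (Kgen A) p. \<beta> q (snd (Kgen A) p q v) = snd (Kgen B) p q (\<beta> p v))"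
    using a2 unfolding \<beta>_def Kgen_def Int_carrier_def Int_le_def by auto
  ultimately show ?thesis unfolding pmod_iso_def by blast
qed


theorem lemma6p11:
  fixes sV :: "'k::field \<Rightarrow> 'v::ab_group_add \<Rightarrow> 'v"
    and sW :: "'k \<Rightarrow> 'w::ab_group_add \<Rightarrow> 'w"
    and P :: "'a set" and leP :: "'a \<Rightarrow> 'a \<Rightarrow> bool"
    and Q :: "'b set" and leQ :: "'b \<Rightarrow> 'b \<Rightarrow> bool"
    and f h :: "'b \<Rightarrow> 'a" and g i :: "'a \<Rightarrow> 'b"
    and \<Gamma> :: "('b, 'w) pmod" and M N :: "('a, 'v) pmod"
  assumes "finite_poset P leP"
    and "is_pmod sV P leP M" and "is_pmod sV P leP N"
    and "galois_coupling sV sW P leP Q leQ f g h i \<Gamma> M N"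
  shows "galois_coupling sV sW
           (Int_carrier (bar_carrier P) (bar_le leP)) (Int_le (bar_le leP))
           (Int_carrier (bar_carrier Q) (bar_le leQ)) (Int_le (bar_le leQ))
           (Int_map (bar_map f)) (Int_map (bar_map g))
           (Int_map (bar_map h)) (Int_map (bar_map i))
           (K_mod \<Gamma>) (K_mod M) (K_mod N)"
proof -
  have fQ: "finite_poset Q leQ" and gi1: "galois_insertion Q leQ P leP f g"
    and gi2: "galois_insertion Q leQ P leP h i" and pG: "is_pmod sW Q leQ \<Gamma>"
    and is1: "pmod_iso sW sV P leP (pullback g \<Gamma>) M" and is2: "pmod_iso sW sV P leP (pullback i \<Gamma>) N"
    using assms(4) unfolding galois_coupling_def by auto
  have vV: "vector_space sV" using assms(2) unfolding is_pmod_def by auto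
  have vW: "vector_space sW" using pG unfolding is_pmod_def by auto
  have mg: "monotone_between P leP Q leQ g" using gi1 unfolding galois_insertion_def by auto
  have mi: "monotone_between P leP Q leQ i" using gi2 unfolding galois_insertion_def by auto
  have iso1: "pmod_iso sW sV (Int_carrier (bar_carrier P) (bar_le leP)) (Int_le (bar_le leP))
      (pullback (Int_map (bar_map g)) (K_mod \<Gamma>)) (K_mod M)"
    unfolding K_Kgen pull_K pull_bar
    by (rule iso_K[OF bar_pmod[OF pull_pmod[OF pG mg]] iso_bar[OF vW vV is1]])
  have iso2: "pmod_iso sW sV (Int_carrier (bar_carrier P) (bar_le leP)) (Int_le (bar_le leP))
      (pullback (Int_map (bar_map i)) (K_mod \<Gamma>)) (K_mod N)"
    unfolding K_Kgen pull_K pull_bar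
    by (rule iso_K[OF bar_pmod[OF pull_pmod[OF pG mi]] iso_bar[OF vW vV is2]])
  show ?thesis
    unfolding galois_coupling_def K_Kgen
  proof (intro conjI)
    show "finite_poset (Int_carrier (bar_carrier P) (bar_le leP)) (Int_le (bar_le leP))"
      by (rule fp_Int[OF fp_bar[OF assms(1)]])
    show "finite_poset (Int_carrier (bar_carrier Q) (bar_le leQ)) (Int_le (bar_le leQ))"
      by (rule fp_Int[OF fp_bar[OF fQ]])
    show "is_pmod sV (Int_carrier (bar_carrier P) (bar_le leP)) (Int_le (bar_le leP)) (Kgen (bar_mod M))"
      by (rule K_pmod[OF bar_pmod[OF assms(2)]])
    show "is_pmod sV (Int_carrier (bar_carrier P) (bar_le leP)) (Int_le (bar_le leP)) (Kgen (bar_mod N))"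
      by (rule K_pmod[OF bar_pmod[OF assms(3)]])
    show "is_pmod sW (Int_carrier (bar_carrier Q) (bar_le leQ)) (Int_le (bar_le leQ)) (Kgen (bar_mod \<Gamma>))"
      by (rule K_pmod[OF bar_pmod[OF pG]])
    show "galois_insertion (Int_carrier (bar_carrier Q) (bar_le leQ)) (Int_le (bar_le leQ))
      (Int_carrier (bar_carrier P) (bar_le leP)) (Int_le (bar_le leP)) (Int_map (bar_map f)) (Int_map (bar_map g))"
      by (rule gi_Int[OF gi_bar[OF gi1]])
    show "galois_insertion (Int_carrier (bar_carrier Q) (bar_le leQ)) (Int_le (bar_le leQ))
      (Int_carrier (bar_carrier P) (bar_le leP)) (Int_le (bar_le leP)) (Int_map (bar_map h)) (Int_map (bar_map i))"
      by (rule gi_Int[OF gi_bar[OF gi2]])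
    show "pmod_iso sW sV (Int_carrier (bar_carrier P) (bar_le leP)) (Int_le (bar_le leP))
      (pullback (Int_map (bar_map g)) (Kgen (bar_mod \<Gamma>))) (Kgen (bar_mod M))"
      using iso1 unfolding K_Kgen .
    show "pmod_iso sW sV (Int_carrier (bar_carrier P) (bar_le leP)) (Int_le (bar_le leP))
      (pullback (Int_map (bar_map i)) (Kgen (bar_mod \<Gamma>))) (Kgen (bar_mod N))"
      using iso2 unfolding K_Kgen .
  qed
qed

end
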